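(* For every pair of disjoint sets $A,B\subseteq\{0,1,2\}^n$, \[ |\partial A| + |\partial B| \ge 3^{-n}\,|A|\,|B|. \]
   Context: For $S\subseteq\{0,1,2\}^n$ and $1\le i\le n$, the upper edge border in direction $i$ is $\partial_i S=\{(v_{-i},v_i,v_i') : (v_{-i},v_i)\in S,\ (v_{-i},v_i')\notin S,\ v_i<v_i'\}$, where $v_i,v_i'\in\{0,1,2\}$ and $(v_{-i},t)$ denotes the vector agreeing with $v$ off coordinate $i$ and equal to $t$ at coordinate $i$. The upper edge border is $\partial S=\bigcup_i\partial_i S$ (a disjoint union), so $|\partial S|=\sum_i|\partial_i S|$. *)

theory Defs
  imports Complex_Main
begin

text \<open>Vectors in {0,1,2}^n are represented as functions nat => nat with values in {0,1,2}
  on coordinates 0..n-1 and value 0 outside (extensional representation).\<close>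

definition cube :: "nat \<Rightarrow> (nat \<Rightarrow> nat) set" where
  "cube n = {v. (\<forall>i<n. v i \<le> 2) \<and> (\<forall>i\<ge>n. v i = 0)}"

definition border_dir :: "(nat \<Rightarrow> nat) set \<Rightarrow> nat \<Rightarrow> ((nat \<Rightarrow> nat) \<times> nat \<times> nat) set" where
  "border_dir S i = {(v, a, b). v \<in> S \<and> v i = a \<and> a < b \<and> b \<le> 2 \<and> v(i := b) \<notin> S}"

definition border_size :: "nat \<Rightarrow> (nat \<Rightarrow> nat) set \<Rightarrow> nat" where
  "border_size n S = (\<Sum>i<n. card (border_dir S i))"

end

theory Submission
  imports Defs
begin

definition sl :: "nat \<Rightarrow> (nat\<Rightarrow>nat) set \<Rightarrow> nat \<Rightarrow> (nat\<Rightarrow>nat) set" where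
  "sl n S j = {w. w n = 0 \<and> w(n:=j) \<in> S}"

lemma cube0: "cube 0 = {\<lambda>_. 0}"
  by (auto simp: cube_def)

lemma cube_Suc_sub: "cube (Suc n) \<subseteq> (\<lambda>(w,j). w(n:=j)) ` (cube n \<times> {..2::nat})"
proof
  fix v assume v: "v \<in> cube (Suc n)"
  have "v = (\<lambda>(w,j). w(n:=j)) (v(n:=0), v n)" by auto
  moreover have "(v(n:=0), v n) \<in> cube n \<times> {..2}" using v
    by (auto simp: cube_def)
  ultimately show "v \<in> (\<lambda>(w,j). w(n:=j)) ` (cube n \<times> {..2::nat})" by blast
qed

lemma cube_fin: "finite (cube n) \<and> card (cube n) \<le> 3 ^ n"
proof (induction n)
  case 0 thus ?case by (simp add: cube0)
next
  case (Suc n)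
  have f: "finite (cube n \<times> {..2::nat})" using Suc by simp
  have "card (cube (Suc n)) \<le> card ((\<lambda>(w,j). w(n:=j)) ` (cube n \<times> {..2::nat}))"
    by (rule card_mono[OF finite_imageI[OF f] cube_Suc_sub])
  also have "\<dots> \<le> card (cube n \<times> {..2::nat})" by (rule card_image_le[OF f])
  also have "\<dots> = card (cube n) * 3" by (simp add: card_cartesian_product)
  also have "\<dots> \<le> 3 ^ Suc n" using Suc by simp
  finally show ?case using finite_subset[OF cube_Suc_sub finite_imageI[OF f]] by simp
qed

lemma sl_cube: assumes "S \<subseteq> cube (Suc n)" shows "sl n S j \<subseteq> cube n"
proof
  fix w assume "w \<in> sl n S j"
  hence w0: "w n = 0" and c: "w(n:=j) \<in> cube (Suc n)" using assms by (auto simp: sl_def)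
  have a: "\<forall>i<n. w i \<le> 2"
  proof (intro allI impI)
    fix i assume "i < n"
    have "\<forall>k<Suc n. (w(n:=j)) k \<le> 2" using c unfolding cube_def by blast
    hence "(w(n:=j)) i \<le> 2" using \<open>i < n\<close> less_SucI by blast
    thus "w i \<le> 2" using \<open>i < n\<close> by simp
  qed
  have b: "\<forall>i\<ge>n. w i = 0"
  proof (intro allI impI)
    fix i assume "i \<ge> n"
    show "w i = 0"
    proof (cases "i = n")
      case True thus ?thesis using w0 by simp
    next
      case False
      hence "w i = (w(n:=j)) i" by simp
      thus "w i = 0" using c False \<open>i \<ge> n\<close> unfolding cube_def by simp
    qed
  qed
  show "w \<in> cube n" using a b by (simp add: cube_def)
qed

lemma S_decomp: assumes "S \<subseteq> cube (Suc n)"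
  shows "S = (\<lambda>w. w(n:=0)) ` sl n S 0 \<union> (\<lambda>w. w(n:=1)) ` sl n S 1 \<union> (\<lambda>w. w(n:=2)) ` sl n S 2"
proof
  show "S \<subseteq> (\<lambda>w. w(n:=0)) ` sl n S 0 \<union> (\<lambda>w. w(n:=1)) ` sl n S 1 \<union> (\<lambda>w. w(n:=2)) ` sl n S 2"
  proof
    fix v assume v: "v \<in> S"
    have vn: "v n \<le> 2" using v assms by (auto simp: cube_def)
    have e: "v = (v(n:=0))(n := v n)" by simp
    have m: "v(n:=0) \<in> sl n S (v n)" using v by (simp add: sl_def)
    have "v n = 0 \<or> v n = 1 \<or> v n = 2" using vn by auto
    thus "v \<in> (\<lambda>w. w(n:=0)) ` sl n S 0 \<union> (\<lambda>w. w(n:=1)) ` sl n S 1 \<union> (\<lambda>w. w(n:=2)) ` sl n S 2"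
      using e m by (metis UnI1 UnI2 image_eqI)
  qed
qed (auto simp: sl_def)

lemma inj_sl: "inj_on (\<lambda>w. w(n:=j)) (sl n S j)"
  unfolding inj_on_def sl_def
  by (auto simp: fun_eq_iff) (metis fun_upd_apply)

lemma card3: "finite X \<Longrightarrow> finite Y \<Longrightarrow> finite Z \<Longrightarrow> X \<inter> Y = {} \<Longrightarrow> X \<inter> Z = {} \<Longrightarrow> Y \<inter> Z = {}
  \<Longrightarrow> card (X \<union> Y \<union> Z) = card X + card Y + card Z"
  by (simp add: card_Un_disjoint Int_Un_distrib2)

lemma card_slices: assumes "S \<subseteq> cube (Suc n)"
  shows "card S = card (sl n S 0) + card (sl n S 1) + card (sl n S 2)"
proof -
  have fin: "finite (sl n S j)" for j using sl_cube[OF assms] cube_fin finite_subset by blast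
  have ci: "card ((\<lambda>w. w(n:=j)) ` sl n S j) = card (sl n S j)" for j
    by (rule card_image[OF inj_sl])
  have d: "(\<lambda>w. w(n:=j)) ` sl n S j \<inter> (\<lambda>w. w(n:=k)) ` sl n S k = {}" if "j \<noteq> k" for j k
    using that by (auto simp: fun_eq_iff) (metis fun_upd_same)
  have "card S = card ((\<lambda>w. w(n:=0)) ` sl n S 0 \<union> (\<lambda>w. w(n:=1)) ` sl n S 1 \<union> (\<lambda>w. w(n:=2)) ` sl n S 2)"
    using S_decomp[OF assms] by simp
  also have "\<dots> = card ((\<lambda>w. w(n:=0)) ` sl n S 0) + card ((\<lambda>w. w(n:=1)) ` sl n S 1) + card ((\<lambda>w. w(n:=2)) ` sl n S 2)"
    by (rule card3) (simp_all add: fin d)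
  finally show ?thesis by (simp only: ci)
qed

lemma pair_bound:
  fixes a a' b b' N al be :: real
  assumes "0 \<le> a" "a \<le> N" "0 \<le> a'" "a' \<le> N" "0 \<le> b" "b \<le> N" "0 \<le> b'" "b' \<le> N"
    "al \<ge> a - a'" "al \<ge> 0" "be \<ge> b - b'" "be \<ge> 0"
  shows "(a - a') * (b' - b) \<le> N * (al + be)"
proof (cases "a \<ge> a'")
  case True
  show ?thesis
  proof (cases "b' \<ge> b")
    case True
    have "(a - a') * (b' - b) \<le> al * N"
      using \<open>a \<ge> a'\<close> True assms by (intro mult_mono) auto
    moreover have "N * (al + be) = al * N + N * be" by (simp add: algebra_simps)
    moreover have "0 \<le> N * be" using assms by simp
    ultimately show ?thesis by linarith
  next
    case False
    have "(a - a') * (b' - b) \<le> 0" using False \<open>a \<ge> a'\<close> by (simp add: mult_nonneg_nonpos)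
    moreover have "0 \<le> N * (al + be)" using assms by simp
    ultimately show ?thesis by linarith
  qed
next
  case False
  show ?thesis
  proof (cases "b' \<ge> b")
    case True
    have "(a - a') * (b' - b) \<le> 0" using False True by (simp add: mult_nonpos_nonneg)
    moreover have "0 \<le> N * (al + be)" using assms by simp
    ultimately show ?thesis by linarith
  next
    case False
    have "(a' - a) * (b - b') \<le> N * be"
      using \<open>\<not> a \<ge> a'\<close> False assms by (intro mult_mono) auto
    moreover have "(a - a') * (b' - b) = (a' - a) * (b - b')" by (simp add: algebra_simps)
    moreover have "N * (al + be) = N * al + N * be" by (simp add: algebra_simps)
    moreover have "0 \<le> N * al" using assms by simp
    ultimately show ?thesis by linarith
  qed
qed

lemma fin_border: "finite S \<Longrightarrow> finite (border_dir S i)"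
proof -
  assume "finite S"
  have "border_dir S i \<subseteq> S \<times> {..2::nat} \<times> {..2::nat}" by (auto simp: border_dir_def)
  thus ?thesis using \<open>finite S\<close> finite_subset by blast
qed

lemma fin_sub: "S \<subseteq> cube m \<Longrightarrow> finite S"
  using cube_fin finite_subset by blast

lemma border_horiz:
  assumes S: "S \<subseteq> cube (Suc n)" and i: "i < n"
  shows "card (border_dir (sl n S 0) i) + card (border_dir (sl n S 1) i) + card (border_dir (sl n S 2) i)
         \<le> card (border_dir S i)"
proof -
  define f where "f j = (\<lambda>(w::nat\<Rightarrow>nat,a::nat,b::nat). (w(n:=j),a,b))" for j :: nat
  have ine: "i \<noteq> n" using i by simp
  have sub: "f j ` border_dir (sl n S j) i \<subseteq> border_dir S i" for j
  proof
    fix x assume "x \<in> f j ` border_dir (sl n S j) i"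
    then obtain w a b where x: "x = (w(n:=j),a,b)" and m: "(w,a,b) \<in> border_dir (sl n S j) i"
      unfolding f_def by auto
    from m have w0: "w n = 0" and wS: "w(n:=j) \<in> S" and wi: "w i = a" and ab: "a < b" "b \<le> 2"
      and nb: "w(i:=b) \<notin> sl n S j" by (auto simp: border_dir_def sl_def)
    have "(w(i:=b)) n = 0" using w0 ine by simp
    hence "(w(i:=b))(n:=j) \<notin> S" using nb by (simp add: sl_def)
    moreover have "(w(i:=b))(n:=j) = (w(n:=j))(i:=b)" using ine by (rule fun_upd_twist)
    ultimately have "(w(n:=j))(i:=b) \<notin> S" by simp
    moreover have "(w(n:=j)) i = a" using wi ine by simp
    ultimately show "x \<in> border_dir S i" using x wS ab by (simp add: border_dir_def)
  qed
  have inj: "inj_on (f j) (border_dir (sl n S j) i)" for j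
  proof (rule inj_onI)
    fix x y assume x: "x \<in> border_dir (sl n S j) i" and y: "y \<in> border_dir (sl n S j) i"
      and e: "f j x = f j y"
    obtain w a b where xx: "x = (w,a,b)" by (cases x) auto
    obtain w' a' b' where yy: "y = (w',a',b')" by (cases y) auto
    have "w n = 0" "w' n = 0" using x y xx yy by (auto simp: border_dir_def sl_def)
    moreover have "w(n:=j) = w'(n:=j)" "a = a'" "b = b'" using e xx yy by (auto simp: f_def)
    ultimately have "w = w'" by (metis fun_upd_triv fun_upd_upd)
    thus "x = y" using xx yy \<open>a = a'\<close> \<open>b = b'\<close> by simp
  qed
  have disj: "f j ` border_dir (sl n S j) i \<inter> f k ` border_dir (sl n S k) i = {}" if "j \<noteq> k" for j k
  proof -
    have "fst (f j x) n = j" for j x by (cases x) (simp add: f_def)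
    thus ?thesis using that by (metis disjoint_iff imageE)
  qed
  have fS: "finite S" using S by (rule fin_sub)
  have fb: "finite (border_dir (sl n S j) i)" for j
    using fin_border fin_sub[OF sl_cube[OF S]] by blast
  have "card (border_dir (sl n S 0) i) + card (border_dir (sl n S 1) i) + card (border_dir (sl n S 2) i)
     = card (f 0 ` border_dir (sl n S 0) i) + card (f 1 ` border_dir (sl n S 1) i) + card (f 2 ` border_dir (sl n S 2) i)"
    by (simp add: card_image[OF inj])
  also have "\<dots> = card (f 0 ` border_dir (sl n S 0) i \<union> f 1 ` border_dir (sl n S 1) i \<union> f 2 ` border_dir (sl n S 2) i)"
    by (rule card3[symmetric]) (simp_all add: fb disj)
  also have "\<dots> \<le> card (border_dir S i)"
    by (rule card_mono) (simp_all add: fin_border[OF fS] sub)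
  finally show ?thesis .
qed

lemma border_vert:
  assumes S: "S \<subseteq> cube (Suc n)"
  shows "card (sl n S 0 - sl n S 1) + card (sl n S 0 - sl n S 2) + card (sl n S 1 - sl n S 2)
         \<le> card (border_dir S n)"
proof -
  define g where "g j k = (\<lambda>w::nat\<Rightarrow>nat. (w(n:=j), j, k))" for j k :: nat
  have sub: "g j k ` (sl n S j - sl n S k) \<subseteq> border_dir S n" if "j < k" "k \<le> 2" for j k
  proof
    fix x assume "x \<in> g j k ` (sl n S j - sl n S k)"
    then obtain w where x: "x = (w(n:=j), j, k)" and w: "w \<in> sl n S j" "w \<notin> sl n S k"
      unfolding g_def by auto
    have "w n = 0" "w(n:=j) \<in> S" using w by (auto simp: sl_def)
    moreover have "w(n:=k) \<notin> S" using w \<open>w n = 0\<close> by (simp add: sl_def)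
    ultimately show "x \<in> border_dir S n" using x that by (simp add: border_dir_def)
  qed
  have inj: "inj_on (g j k) (sl n S j - sl n S k)" for j k
  proof (rule inj_onI)
    fix w w' assume "w \<in> sl n S j - sl n S k" "w' \<in> sl n S j - sl n S k" "g j k w = g j k w'"
    hence "w n = 0" "w' n = 0" "w(n:=j) = w'(n:=j)" by (auto simp: sl_def g_def)
    thus "w = w'" by (metis fun_upd_triv fun_upd_upd)
  qed
  have disj: "g j k ` X \<inter> g j' k' ` Y = {}" if "(j,k) \<noteq> (j',k')" for j k j' k' X Y
    using that by (auto simp: g_def)
  have fS: "finite S" using S by (rule fin_sub)
  have fs: "finite (sl n S j - sl n S k)" for j k
    using fin_sub[OF sl_cube[OF S]] by blast
  have "card (sl n S 0 - sl n S 1) + card (sl n S 0 - sl n S 2) + card (sl n S 1 - sl n S 2)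
      = card (g 0 1 ` (sl n S 0 - sl n S 1)) + card (g 0 2 ` (sl n S 0 - sl n S 2)) + card (g 1 2 ` (sl n S 1 - sl n S 2))"
    by (simp add: card_image[OF inj])
  also have "\<dots> = card (g 0 1 ` (sl n S 0 - sl n S 1) \<union> g 0 2 ` (sl n S 0 - sl n S 2) \<union> g 1 2 ` (sl n S 1 - sl n S 2))"
    by (rule card3[symmetric]) (simp_all add: fs disj)
  also have "\<dots> \<le> card (border_dir S n)"
    by (rule card_mono) (simp_all add: fin_border[OF fS] sub)
  finally show ?thesis .
qed

lemma card_diff_real: "finite X \<Longrightarrow> finite Y \<Longrightarrow> real (card X) - real (card Y) \<le> real (card (X - Y))"
proof -
  assume f: "finite X" "finite Y"
  have "card X \<le> card ((X - Y) \<union> Y)" using f by (intro card_mono) auto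
  also have "\<dots> \<le> card (X - Y) + card Y" by (rule card_Un_le)
  finally show ?thesis by simp
qed

lemma lin3:
  fixes c0 c1 c2 n0 n1 n2 d1 d2 d3 e1 e2 e3 E :: real
  assumes "c0 \<le> n0" "c1 \<le> n1" "c2 \<le> n2" "d1 \<le> e1" "d2 \<le> e2" "d3 \<le> e3"
    "e1 + e2 + e3 = E" "0 \<le> E"
  shows "3 * (c0 + c1 + c2) + d1 + d2 + d3 \<le> 3 * n0 + 3 * n1 + 3 * n2 + 3 * E"
  using assms by argo

lemma final_arith:
  fixes N a0 a1 a2 b0 b1 b2 P0 P1 P2 x01 x02 x12 y01 y02 y12 :: real
  assumes N: "N > 0"
    and h0: "a0 * b0 / N \<le> P0" and h1: "a1 * b1 / N \<le> P1" and h2: "a2 * b2 / N \<le> P2"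
    and p01: "(a0 - a1) * (b1 - b0) \<le> N * (x01 + y01)"
    and p02: "(a0 - a2) * (b2 - b0) \<le> N * (x02 + y02)"
    and p12: "(a1 - a2) * (b2 - b1) \<le> N * (x12 + y12)"
    and nn: "0 \<le> x01 + y01 + x02 + y02 + x12 + y12"
  shows "(a0 + a1 + a2) * (b0 + b1 + b2) / (3 * N) \<le> P0 + P1 + P2 + (x01 + x02 + x12) + (y01 + y02 + y12)"
proof -
  have q0: "a0 * b0 \<le> N * P0" using h0 N by (simp add: pos_divide_le_eq mult.commute)
  have q1: "a1 * b1 \<le> N * P1" using h1 N by (simp add: pos_divide_le_eq mult.commute)
  have q2: "a2 * b2 \<le> N * P2" using h2 N by (simp add: pos_divide_le_eq mult.commute)
  have id: "(a0 + a1 + a2) * (b0 + b1 + b2) = 3 * (a0*b0 + a1*b1 + a2*b2)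
      + (a0 - a1) * (b1 - b0) + (a0 - a2) * (b2 - b0) + (a1 - a2) * (b2 - b1)"
    by (simp add: algebra_simps)
  have e: "N * (x01 + y01) + N * (x02 + y02) + N * (x12 + y12) = N * (x01 + y01 + x02 + y02 + x12 + y12)"
    by (simp add: algebra_simps)
  have nn2: "0 \<le> N * (x01 + y01 + x02 + y02 + x12 + y12)" using N nn by simp
  have "(a0 + a1 + a2) * (b0 + b1 + b2) \<le> (3 * N) * (P0 + P1 + P2 + (x01 + x02 + x12) + (y01 + y02 + y12))"
  proof -
    have r: "(3 * N) * (P0 + P1 + P2 + (x01 + x02 + x12) + (y01 + y02 + y12))
       = 3 * (N * P0) + 3 * (N * P1) + 3 * (N*P2) + 3 * (N * (x01 + y01 + x02 + y02 + x12 + y12))"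
      by (simp add: algebra_simps)
    show ?thesis unfolding r id by (rule lin3[OF q0 q1 q2 p01 p02 p12 e nn2])
  qed
  thus ?thesis using N by (simp add: pos_divide_le_eq mult.commute)
qed

theorem proposition3p5:
  fixes n :: nat and A B :: "(nat \<Rightarrow> nat) set"
  assumes "A \<subseteq> cube n" and "B \<subseteq> cube n" and "A \<inter> B = {}"
  shows "real (border_size n A) + real (border_size n B)
           \<ge> real (card A) * real (card B) / (3::real) ^ n"
  using assms
proof (induction n arbitrary: A B)
  case 0
  have "card A = 0 \<or> card B = 0"
  proof (rule ccontr)
    assume "\<not> (card A = 0 \<or> card B = 0)"
    hence "A \<noteq> {}" "B \<noteq> {}" by auto
    then obtain x y where "x \<in> A" "y \<in> B" by blast
    hence "x = y" using 0 by (auto simp: cube0)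
    thus False using \<open>x \<in> A\<close> \<open>y \<in> B\<close> 0 by blast
  qed
  thus ?case by (auto simp: border_size_def)
next
  case (Suc n)
  note AS = Suc.prems(1) and BS = Suc.prems(2) and D = Suc.prems(3)
  define N :: real where "N = 3 ^ n"
  have Npos: "N > 0" by (simp add: N_def)
  have slc: "sl n A j \<subseteq> cube n" "sl n B j \<subseteq> cube n" for j
    using sl_cube AS BS by auto
  have sld: "sl n A j \<inter> sl n B j = {}" for j using D by (auto simp: sl_def)
  have IH: "real (card (sl n A j)) * real (card (sl n B j)) / N
       \<le> real (border_size n (sl n A j)) + real (border_size n (sl n B j))" for j
    using Suc.IH[OF slc(1) slc(2) sld] by (simp add: N_def)
  have cb: "real (card (sl n S j)) \<le> N" if "S \<subseteq> cube (Suc n)" for S j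
  proof -
    have "card (sl n S j) \<le> card (cube n)" using cube_fin sl_cube[OF that] by (intro card_mono) auto
    also have "\<dots> \<le> 3 ^ n" using cube_fin by blast
    finally show ?thesis by (simp add: N_def)
  qed
  have fsl: "finite (sl n S j)" if "S \<subseteq> cube (Suc n)" for S j
    using fin_sub[OF sl_cube[OF that]] .
  have bs: "real (border_size n (sl n S 0)) + real (border_size n (sl n S 1)) + real (border_size n (sl n S 2))
      + (real (card (sl n S 0 - sl n S 1)) + real (card (sl n S 0 - sl n S 2)) + real (card (sl n S 1 - sl n S 2)))
      \<le> real (border_size (Suc n) S)" if S: "S \<subseteq> cube (Suc n)" for S
  proof -
    have "border_size n (sl n S 0) + border_size n (sl n S 1) + border_size n (sl n S 2)
        = (\<Sum>i<n. card (border_dir (sl n S 0) i) + card (border_dir (sl n S 1) i) + card (border_dir (sl n S 2) i))"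
      by (simp add: border_size_def sum.distrib)
    also have "\<dots> \<le> (\<Sum>i<n. card (border_dir S i))"
      by (rule sum_mono) (rule border_horiz[OF S], simp)
    finally have h: "border_size n (sl n S 0) + border_size n (sl n S 1) + border_size n (sl n S 2)
        + (card (sl n S 0 - sl n S 1) + card (sl n S 0 - sl n S 2) + card (sl n S 1 - sl n S 2))
        \<le> border_size (Suc n) S"
      using border_vert[OF S] by (simp add: border_size_def)
    show ?thesis using h by (simp only: of_nat_add[symmetric] of_nat_le_iff)
  qed
  have pb: "(real (card (sl n A j)) - real (card (sl n A k))) * (real (card (sl n B k)) - real (card (sl n B j)))
     \<le> N * (real (card (sl n A j - sl n A k)) + real (card (sl n B j - sl n B k)))" for j k
    by (rule pair_bound) (simp_all add: cb AS BS card_diff_real fsl)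
  have "real (card A) * real (card B) / (3 * N)
      \<le> (real (border_size n (sl n A 0)) + real (border_size n (sl n B 0)))
        + (real (border_size n (sl n A 1)) + real (border_size n (sl n B 1)))
        + (real (border_size n (sl n A 2)) + real (border_size n (sl n B 2)))
        + (real (card (sl n A 0 - sl n A 1)) + real (card (sl n A 0 - sl n A 2)) + real (card (sl n A 1 - sl n A 2)))
        + (real (card (sl n B 0 - sl n B 1)) + real (card (sl n B 0 - sl n B 2)) + real (card (sl n B 1 - sl n B 2)))"
    unfolding card_slices[OF AS] card_slices[OF BS] of_nat_add
    by (rule final_arith[OF Npos IH IH IH pb pb pb]) simp
  also have "\<dots> \<le> real (border_size (Suc n) A) + real (border_size (Suc n) B)"
    using bs[OF AS] bs[OF BS] by linarith
  finally show ?case by (simp add: N_def)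
qed

end
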